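(* Let $g$ be a $C^1$ function near $0\in\mathbb{C}$ with $g(0)=0$, $g_z(0)=0$, $g_{\bar z}(0)=1$, such that $z^2$ and $g^2$ separate points near $0$. Let $G$ be holomorphic near the origin of $\mathbb{C}^2$ with $G(0,0)=0$, and let $F(w_1,w_2)=w_2G(w_1^2,w_2^2)$. Then for every closed disk $D$ centered at $0$ with sufficiently small radius, $$[\,z^2,\ (g+F(z,g))^2\,;\,D\,]=[\,z^2,\ g^2\,;\,D\,],$$ where $(g+F(z,g))(z)=g(z)+F(z,g(z))$.
   Context: For continuous functions $f_1,f_2$ on a compact set $D\subset\mathbb{C}$, $[f_1,f_2;D]$ denotes the uniform closure in $C(D)$ of the set of polynomials (with complex coefficients) in $f_1$ and $f_2$. *)

theory Defs
  imports "HOL-Analysis.Analysis"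
begin

text \<open>Real (Frechet) C^1 regularity of a map complex => complex on a neighbourhood of 0.
  The derivative at z is a real-linear map determined by its values at 1 and i,
  so continuity of these two partial derivatives is continuity of the derivative.\<close>
definition C1_near_0 :: "(complex \<Rightarrow> complex) \<Rightarrow> bool" where
  "C1_near_0 g \<longleftrightarrow> (\<exists>U g'. open U \<and> 0 \<in> U \<and>
      (\<forall>z\<in>U. (g has_derivative g' z) (at z)) \<and>
      continuous_on U (\<lambda>z. g' z 1) \<and> continuous_on U (\<lambda>z. g' z \<i>))"

definition wirt_z :: "(complex \<Rightarrow> complex) \<Rightarrow> complex \<Rightarrow> complex" where
  "wirt_z g z = (frechet_derivative g (at z) 1 - \<i> * frechet_derivative g (at z) \<i>) / 2"

definition wirt_zbar :: "(complex \<Rightarrow> complex) \<Rightarrow> complex \<Rightarrow> complex" where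
  "wirt_zbar g z = (frechet_derivative g (at z) 1 + \<i> * frechet_derivative g (at z) \<i>) / 2"

definition separate_points_near_0 :: "(complex \<Rightarrow> complex) \<Rightarrow> (complex \<Rightarrow> complex) \<Rightarrow> bool" where
  "separate_points_near_0 f1 f2 \<longleftrightarrow> (\<exists>U. open U \<and> 0 \<in> U \<and>
      (\<forall>z\<in>U. \<forall>w\<in>U. z \<noteq> w \<longrightarrow> (f1 z, f2 z) \<noteq> (f1 w, f2 w)))"

definition holomorphic2_near_0 :: "(complex \<times> complex \<Rightarrow> complex) \<Rightarrow> bool" where
  "holomorphic2_near_0 G \<longleftrightarrow> (\<exists>U. open U \<and> (0,0) \<in> U \<and>
      (\<forall>p\<in>U. \<exists>L. (G has_derivative L) (at p) \<and>
          (\<forall>c a b. L (c * a, c * b) = c * L (a, b))))"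

definition polys2 :: "(complex \<Rightarrow> complex) \<Rightarrow> (complex \<Rightarrow> complex) \<Rightarrow> (complex \<Rightarrow> complex) set" where
  "polys2 f1 f2 = {P. \<exists>S c. finite S \<and>
      P = (\<lambda>z. \<Sum>(i,j)\<in>S. c (i,j) * f1 z ^ i * f2 z ^ j)}"

text \<open>[f1,f2;D]: uniform closure in C(D) of the polynomials in f1, f2. Functions are
  total on complex; membership only depends on the restriction to D.\<close>
definition unif_alg :: "(complex \<Rightarrow> complex) \<Rightarrow> (complex \<Rightarrow> complex) \<Rightarrow> complex set \<Rightarrow> (complex \<Rightarrow> complex) set" where
  "unif_alg f1 f2 D = {h. continuous_on D h \<and>
      (\<forall>e>0. \<exists>P\<in>polys2 f1 f2. \<forall>z\<in>D. norm (h z - P z) < e)}"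

end

theory Submission
  imports Defs "HOL-Complex_Analysis.Complex_Analysis"
begin

lemma polys2_alt: "polys2 f1 f2 = {P. \<exists>S c. finite S \<and>
      P = (\<lambda>z. \<Sum>x\<in>S. c x * f1 z ^ fst x * f2 z ^ snd x)}"
  unfolding polys2_def by (simp add: split_def)

lemma polys2I: "finite S \<Longrightarrow> (\<lambda>z. \<Sum>x\<in>S. c x * f1 z ^ fst x * f2 z ^ snd x) \<in> polys2 f1 f2"
  unfolding polys2_alt by blast

lemma polys2E:
  assumes "P \<in> polys2 f1 f2"
  obtains S c where "finite S" "P = (\<lambda>z. \<Sum>x\<in>S. c x * f1 z ^ fst x * f2 z ^ snd x)"
  using assms unfolding polys2_alt by blast

lemma polys2_const: "(\<lambda>z. c) \<in> polys2 f1 f2"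
  using polys2I[of "{(0,0)}" "\<lambda>_. c" f1 f2] by simp

lemma polys2_f1: "f1 \<in> polys2 f1 f2"
  using polys2I[of "{(1,0)}" "\<lambda>_. 1" f1 f2] by simp

lemma polys2_f2: "f2 \<in> polys2 f1 f2"
  using polys2I[of "{(0,1)}" "\<lambda>_. 1" f1 f2] by simp

lemma polys2_add:
  assumes "P \<in> polys2 f1 f2" "Q \<in> polys2 f1 f2"
  shows "(\<lambda>z. P z + Q z) \<in> polys2 f1 f2"
proof -
  obtain S c where S: "finite S" "P = (\<lambda>z. \<Sum>x\<in>S. c x * f1 z ^ fst x * f2 z ^ snd x)"
    using assms(1) by (rule polys2E)
  obtain T d where T: "finite T" "Q = (\<lambda>z. \<Sum>x\<in>T. d x * f1 z ^ fst x * f2 z ^ snd x)"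
    using assms(2) by (rule polys2E)
  define e where "e = (\<lambda>x. (if x \<in> S then c x else 0) + (if x \<in> T then d x else 0))"
  have "(\<lambda>z. P z + Q z) = (\<lambda>z. \<Sum>x\<in>S\<union>T. e x * f1 z ^ fst x * f2 z ^ snd x)"
  proof
    fix z
    have "(\<Sum>x\<in>S\<union>T. e x * f1 z ^ fst x * f2 z ^ snd x)
       = (\<Sum>x\<in>S\<union>T. (if x \<in> S then c x * f1 z ^ fst x * f2 z ^ snd x else 0))
       + (\<Sum>x\<in>S\<union>T. (if x \<in> T then d x * f1 z ^ fst x * f2 z ^ snd x else 0))"
      unfolding sum.distrib[symmetric] by (rule sum.cong) (auto simp: e_def algebra_simps)
    also have "\<dots> = P z + Q z"
      using S T by (simp add: sum.inter_restrict[symmetric] Int_absorb1 Int_absorb2 Un_Int_eq)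
    finally show "P z + Q z = (\<Sum>x\<in>S\<union>T. e x * f1 z ^ fst x * f2 z ^ snd x)" by simp
  qed
  then show ?thesis using S T by (simp add: polys2I)
qed

lemma polys2_mult:
  assumes "P \<in> polys2 f1 f2" "Q \<in> polys2 f1 f2"
  shows "(\<lambda>z. P z * Q z) \<in> polys2 f1 f2"
proof -
  obtain S c where S: "finite S" "P = (\<lambda>z. \<Sum>x\<in>S. c x * f1 z ^ fst x * f2 z ^ snd x)"
    using assms(1) by (rule polys2E)
  obtain T d where T: "finite T" "Q = (\<lambda>z. \<Sum>x\<in>T. d x * f1 z ^ fst x * f2 z ^ snd x)"
    using assms(2) by (rule polys2E)
  define g :: "(nat\<times>nat)\<times>(nat\<times>nat) \<Rightarrow> nat\<times>nat" where "g = (\<lambda>(p,q). (fst p + fst q, snd p + snd q))"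
  define W where "W = g ` (S \<times> T)"
  define e where "e = (\<lambda>y. \<Sum>pq \<in> {pq. pq \<in> S \<times> T \<and> g pq = y}. c (fst pq) * d (snd pq))"
  have fW: "finite W" using S T by (simp add: W_def)
  have "(\<lambda>z. P z * Q z) = (\<lambda>z. \<Sum>x\<in>W. e x * f1 z ^ fst x * f2 z ^ snd x)"
  proof
    fix z
    have "P z * Q z = (\<Sum>p\<in>S. \<Sum>q\<in>T. (c p * f1 z ^ fst p * f2 z ^ snd p) * (d q * f1 z ^ fst q * f2 z ^ snd q))"
      using S T by (simp add: sum_product)
    also have "\<dots> = (\<Sum>pq\<in>S\<times>T. c (fst pq) * d (snd pq) * f1 z ^ fst (g pq) * f2 z ^ snd (g pq))"
      by (simp add: sum.cartesian_product g_def power_add algebra_simps split_def)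
    also have "\<dots> = (\<Sum>y\<in>W. \<Sum>pq \<in> {pq. pq \<in> S \<times> T \<and> g pq = y}. c (fst pq) * d (snd pq) * f1 z ^ fst (g pq) * f2 z ^ snd (g pq))"
      using S T by (intro sum.group[symmetric]) (auto simp: W_def)
    also have "\<dots> = (\<Sum>x\<in>W. e x * f1 z ^ fst x * f2 z ^ snd x)"
      unfolding e_def sum_distrib_right
      by (intro sum.cong refl) auto
    finally show "P z * Q z = (\<Sum>x\<in>W. e x * f1 z ^ fst x * f2 z ^ snd x)" .
  qed
  then show ?thesis using fW by (simp add: polys2I)
qed

lemma polys2_cont:
  assumes "continuous_on D f1" "continuous_on D f2" "P \<in> polys2 f1 f2"
  shows "continuous_on D P"
proof -
  obtain S c where S: "finite S" "P = (\<lambda>z. \<Sum>x\<in>S. c x * f1 z ^ fst x * f2 z ^ snd x)"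
    using assms(3) by (rule polys2E)
  show ?thesis unfolding S(2) using assms(1,2) by (intro continuous_intros) auto
qed

lemma ua_cont: "h \<in> unif_alg f1 f2 D \<Longrightarrow> continuous_on D h"
  unfolding unif_alg_def by blast

lemma ua_approx: "h \<in> unif_alg f1 f2 D \<Longrightarrow> e > 0 \<Longrightarrow> \<exists>P\<in>polys2 f1 f2. \<forall>z\<in>D. norm (h z - P z) < e"
  unfolding unif_alg_def by blast

lemma ua_closed:
  assumes "continuous_on D h"
    and "\<And>e. e > 0 \<Longrightarrow> \<exists>k\<in>unif_alg f1 f2 D. \<forall>z\<in>D. norm (h z - k z) < e"
  shows "h \<in> unif_alg f1 f2 D"
  unfolding unif_alg_def
proof (intro CollectI conjI allI impI assms(1))
  fix e :: real assume "e > 0"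
  then obtain k where k: "k \<in> unif_alg f1 f2 D" "\<forall>z\<in>D. norm (h z - k z) < e/2"
    using assms(2)[of "e/2"] by auto
  then obtain P where P: "P \<in> polys2 f1 f2" "\<forall>z\<in>D. norm (k z - P z) < e/2"
    using ua_approx[OF k(1), of "e/2"] \<open>e>0\<close> by auto
  have "\<forall>z\<in>D. norm (h z - P z) < e"
  proof
    fix z assume "z \<in> D"
    have "norm (h z - P z) \<le> norm (h z - k z) + norm (k z - P z)"
      using norm_triangle_ineq[of "h z - k z" "k z - P z"] by simp
    then show "norm (h z - P z) < e" using k(2) P(2) \<open>z\<in>D\<close> by fastforce
  qed
  then show "\<exists>P\<in>polys2 f1 f2. \<forall>z\<in>D. norm (h z - P z) < e" using P(1) by blast
qed

lemma ua_poly: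
  assumes "continuous_on D f1" "continuous_on D f2" "P \<in> polys2 f1 f2"
  shows "P \<in> unif_alg f1 f2 D"
  unfolding unif_alg_def using assms polys2_cont[OF assms] by force


lemma ua_add:
  assumes "a \<in> unif_alg f1 f2 D" "b \<in> unif_alg f1 f2 D"
  shows "(\<lambda>z. a z + b z) \<in> unif_alg f1 f2 D"
  unfolding unif_alg_def
proof (intro CollectI conjI allI impI)
  show "continuous_on D (\<lambda>z. a z + b z)"
    using assms by (intro continuous_intros) (auto dest: ua_cont)
  fix e :: real assume "e > 0"
  obtain P where P: "P \<in> polys2 f1 f2" "\<forall>z\<in>D. norm (a z - P z) < e/2"
    using ua_approx[OF assms(1), of "e/2"] \<open>e>0\<close> by auto
  obtain Q where Q: "Q \<in> polys2 f1 f2" "\<forall>z\<in>D. norm (b z - Q z) < e/2"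
    using ua_approx[OF assms(2), of "e/2"] \<open>e>0\<close> by auto
  have "\<forall>z\<in>D. norm (a z + b z - (P z + Q z)) < e"
  proof
    fix z assume "z \<in> D"
    have "norm (a z + b z - (P z + Q z)) \<le> norm (a z - P z) + norm (b z - Q z)"
      using norm_triangle_ineq[of "a z - P z" "b z - Q z"] by (simp add: algebra_simps)
    then show "norm (a z + b z - (P z + Q z)) < e" using P(2) Q(2) \<open>z\<in>D\<close> by fastforce
  qed
  then show "\<exists>R\<in>polys2 f1 f2. \<forall>z\<in>D. norm (a z + b z - R z) < e"
    using polys2_add[OF P(1) Q(1)] by (intro bexI[where x="\<lambda>z. P z + Q z"]) auto
qed

lemma bounded_cont_compact:
  assumes "compact D" "continuous_on D a"
  obtains B where "B > 0" "\<forall>z\<in>D. norm (a z) \<le> B"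
proof -
  have "bounded (a ` D)" using assms compact_continuous_image compact_imp_bounded by blast
  then obtain B where "B > 0" "\<forall>x\<in>a ` D. norm x \<le> B" using bounded_pos by blast
  then show ?thesis using that by auto
qed

lemma ua_mult:
  assumes "compact D" "a \<in> unif_alg f1 f2 D" "b \<in> unif_alg f1 f2 D"
  shows "(\<lambda>z. a z * b z) \<in> unif_alg f1 f2 D"
  unfolding unif_alg_def
proof (intro CollectI conjI allI impI)
  show "continuous_on D (\<lambda>z. a z * b z)"
    using assms by (intro continuous_intros) (auto dest: ua_cont)
  obtain Ba where Ba: "Ba > 0" "\<forall>z\<in>D. norm (a z) \<le> Ba"
    using bounded_cont_compact[OF assms(1) ua_cont[OF assms(2)]] by blast
  obtain Bb where Bb: "Bb > 0" "\<forall>z\<in>D. norm (b z) \<le> Bb"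
    using bounded_cont_compact[OF assms(1) ua_cont[OF assms(3)]] by blast
  fix e :: real assume "e > 0"
  define \<eta> where "\<eta> = min 1 (e / (Ba + Bb + 2))"
  have eta12: "\<eta> > 0" "\<eta> \<le> 1"
    using \<open>e>0\<close> Ba Bb by (auto simp: \<eta>_def)
  have "\<eta> \<le> e / (Ba + Bb + 2)" by (simp add: \<eta>_def)
  then have "\<eta> * (Ba + Bb + 2) \<le> e" using Ba Bb by (simp add: pos_le_divide_eq)
  note eta = eta12 this
  obtain P where P: "P \<in> polys2 f1 f2" "\<forall>z\<in>D. norm (a z - P z) < \<eta>"
    using ua_approx[OF assms(2) eta(1)] by auto
  obtain Q where Q: "Q \<in> polys2 f1 f2" "\<forall>z\<in>D. norm (b z - Q z) < \<eta>"
    using ua_approx[OF assms(3) eta(1)] by auto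
  have "\<forall>z\<in>D. norm (a z * b z - P z * Q z) < e"
  proof
    fix z assume z: "z \<in> D"
    have nQ: "norm (Q z) \<le> Bb + 1"
    proof -
      have "norm (Q z) \<le> norm (b z) + norm (Q z - b z)" by (rule norm_triangle_sub)
      moreover have "norm (Q z - b z) = norm (b z - Q z)" by (rule norm_minus_commute)
      ultimately show ?thesis using Q(2) Bb(2) z eta(2) by fastforce
    qed
    have "a z * b z - P z * Q z = a z * (b z - Q z) + (a z - P z) * Q z"
      by (simp add: algebra_simps)
    then have "norm (a z * b z - P z * Q z) \<le> norm (a z * (b z - Q z)) + norm ((a z - P z) * Q z)"
      by (simp add: norm_triangle_ineq)
    also have "\<dots> = norm (a z) * norm (b z - Q z) + norm (a z - P z) * norm (Q z)"
      by (simp add: norm_mult)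
    also have "\<dots> \<le> Ba * \<eta> + \<eta> * (Bb + 1)"
      using Ba Q(2) P(2) z nQ eta(1)
      by (intro add_mono mult_mono) (auto simp: less_imp_le)
    also have "\<dots> < \<eta> * (Ba + Bb + 2)" using eta(1) by (simp add: algebra_simps)
    finally show "norm (a z * b z - P z * Q z) < e" using eta(3) by linarith
  qed
  then show "\<exists>R\<in>polys2 f1 f2. \<forall>z\<in>D. norm (a z * b z - R z) < e"
    using polys2_mult[OF P(1) Q(1)] by (intro bexI[where x="\<lambda>z. P z * Q z"]) auto
qed

lemma ua_const:
  assumes "continuous_on D f1" "continuous_on D f2"
  shows "(\<lambda>z. c) \<in> unif_alg f1 f2 D"
  by (rule ua_poly[OF assms polys2_const])

lemma ua_f1:
  assumes "continuous_on D f1" "continuous_on D f2"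
  shows "f1 \<in> unif_alg f1 f2 D"
  by (rule ua_poly[OF assms polys2_f1])

lemma ua_f2:
  assumes "continuous_on D f1" "continuous_on D f2"
  shows "f2 \<in> unif_alg f1 f2 D"
  by (rule ua_poly[OF assms polys2_f2])

lemma ua_diff:
  assumes "compact D" "continuous_on D f1" "continuous_on D f2"
    "a \<in> unif_alg f1 f2 D" "b \<in> unif_alg f1 f2 D"
  shows "(\<lambda>z. a z - b z) \<in> unif_alg f1 f2 D"
proof -
  have "(\<lambda>z. a z + (-1) * b z) \<in> unif_alg f1 f2 D"
    by (rule ua_add[OF assms(4) ua_mult[OF assms(1) ua_const[OF assms(2,3)] assms(5)]])
  then show ?thesis by simp
qed

lemma ua_pow:
  assumes "compact D" "continuous_on D f1" "continuous_on D f2" "a \<in> unif_alg f1 f2 D"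
  shows "(\<lambda>z. a z ^ n) \<in> unif_alg f1 f2 D"
proof (induction n)
  case 0 show ?case using ua_const[OF assms(2,3)] by simp
next
  case (Suc n)
  then show ?case using ua_mult[OF assms(1) assms(4) Suc] by simp
qed

lemma ua_sum:
  assumes "compact D" "continuous_on D f1" "continuous_on D f2" "finite S"
    "\<And>x. x \<in> S \<Longrightarrow> h x \<in> unif_alg f1 f2 D"
  shows "(\<lambda>z. \<Sum>x\<in>S. h x z) \<in> unif_alg f1 f2 D"
  using assms(4,5)
proof (induction S rule: finite_induct)
  case empty then show ?case using ua_const[OF assms(2,3)] by simp
next
  case (insert x F)
  then show ?case using ua_add[of "h x" f1 f2 D "\<lambda>z. \<Sum>x\<in>F. h x z"] by simp
qed

lemma ua_poly_in:
  assumes "compact D" "continuous_on D f1" "continuous_on D f2"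
    "u1 \<in> unif_alg f1 f2 D" "u2 \<in> unif_alg f1 f2 D" "finite S"
  shows "(\<lambda>z. \<Sum>x\<in>S. c x * u1 z ^ fst x * u2 z ^ snd x) \<in> unif_alg f1 f2 D"
proof (rule ua_sum[OF assms(1-3,6)])
  fix x assume "x\<in>S"
  have "(\<lambda>z. c x * u1 z ^ fst x) \<in> unif_alg f1 f2 D"
    by (rule ua_mult[OF assms(1) ua_const[OF assms(2,3)] ua_pow[OF assms(1-4)]])
  then show "(\<lambda>z. c x * u1 z ^ fst x * u2 z ^ snd x) \<in> unif_alg f1 f2 D"
    by (rule ua_mult[OF assms(1) _ ua_pow[OF assms(1-3,5)]])
qed

lemma ua_subset:
  assumes "compact D" "continuous_on D f1" "continuous_on D f2"
    "u1 \<in> unif_alg f1 f2 D" "u2 \<in> unif_alg f1 f2 D"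
  shows "unif_alg u1 u2 D \<subseteq> unif_alg f1 f2 D"
proof
  fix h assume h: "h \<in> unif_alg u1 u2 D"
  show "h \<in> unif_alg f1 f2 D"
  proof (rule ua_closed[OF ua_cont[OF h]])
    fix e :: real assume "e > 0"
    then obtain P where P: "P \<in> polys2 u1 u2" "\<forall>z\<in>D. norm (h z - P z) < e"
      using ua_approx[OF h] by blast
    from P(1) obtain S c where S: "finite S" "P = (\<lambda>z. \<Sum>x\<in>S. c x * u1 z ^ fst x * u2 z ^ snd x)"
      by (rule polys2E)
    have "P \<in> unif_alg f1 f2 D" unfolding S(2) by (rule ua_poly_in[OF assms S(1)])
    then show "\<exists>k\<in>unif_alg f1 f2 D. \<forall>z\<in>D. norm (h z - k z) < e" using P(2) by blast
  qed
qed

lemma ua_fcalc: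
  assumes "compact D" "continuous_on D f1" "continuous_on D f2"
    "u1 \<in> unif_alg f1 f2 D" "u2 \<in> unif_alg f1 f2 D"
    "\<forall>z\<in>D. norm (u1 z) \<le> \<rho> \<and> norm (u2 z) \<le> \<rho>"
    "continuous_on D (\<lambda>z. Q (u1 z, u2 z))"
    "\<And>e. e > 0 \<Longrightarrow> \<exists>S c. finite S \<and> (\<forall>w1 w2. norm w1 \<le> \<rho> \<longrightarrow> norm w2 \<le> \<rho> \<longrightarrow>
        norm (Q (w1, w2) - (\<Sum>x\<in>S. c x * w1 ^ fst x * w2 ^ snd x)) < e)"
  shows "(\<lambda>z. Q (u1 z, u2 z)) \<in> unif_alg f1 f2 D"
proof (rule ua_closed[OF assms(7)])
  fix e :: real assume "e > 0"
  then obtain S c where S: "finite S" "\<forall>w1 w2. norm w1 \<le> \<rho> \<longrightarrow> norm w2 \<le> \<rho> \<longrightarrow>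
        norm (Q (w1, w2) - (\<Sum>x\<in>S. c x * w1 ^ fst x * w2 ^ snd x)) < e"
    using assms(8) by blast
  have "(\<lambda>z. \<Sum>x\<in>S. c x * u1 z ^ fst x * u2 z ^ snd x) \<in> unif_alg f1 f2 D"
    by (rule ua_poly_in[OF assms(1-5) S(1)])
  moreover have "\<forall>z\<in>D. norm (Q (u1 z, u2 z) - (\<Sum>x\<in>S. c x * u1 z ^ fst x * u2 z ^ snd x)) < e"
    using S(2) assms(6) by blast
  ultimately show "\<exists>k\<in>unif_alg f1 f2 D. \<forall>z\<in>D. norm (Q (u1 z, u2 z) - k z) < e"
    by (intro bexI[where x="\<lambda>z. \<Sum>x\<in>S. c x * u1 z ^ fst x * u2 z ^ snd x"]) auto
qed

lemma partial1:
  fixes G :: "complex \<times> complex \<Rightarrow> complex"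
  assumes "(G has_derivative L) (at (a,b))" "\<And>c x y. L (c*x, c*y) = c * L (x,y)"
  shows "((\<lambda>x. G (x,b)) has_field_derivative L (1,0)) (at a)"
proof -
  have "((\<lambda>x. (x,b)) has_derivative (\<lambda>h. (h,0))) (at a)"
    by (auto intro!: derivative_eq_intros)
  from has_derivative_compose[OF this assms(1)]
  have "((\<lambda>x. G (x,b)) has_derivative (\<lambda>h. L (h,0))) (at a)" by simp
  moreover have "(\<lambda>h. L (h,0)) = (\<lambda>h. L (1,0) * h)"
  proof
    fix h :: complex show "L (h,0) = L (1,0) * h" using assms(2)[of h 1 0] by simp
  qed
  ultimately show ?thesis unfolding has_field_derivative_def by simp
qed

lemma partial2:
  fixes G :: "complex \<times> complex \<Rightarrow> complex"
  assumes "(G has_derivative L) (at (a,b))" "\<And>c x y. L (c*x, c*y) = c * L (x,y)"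
  shows "((\<lambda>y. G (a,y)) has_field_derivative L (0,1)) (at b)"
proof -
  have "((\<lambda>y. (a,y)) has_derivative (\<lambda>h. (0,h))) (at b)"
    by (auto intro!: derivative_eq_intros)
  from has_derivative_compose[OF this assms(1)]
  have "((\<lambda>y. G (a,y)) has_derivative (\<lambda>h. L (0,h))) (at b)" by simp
  moreover have "(\<lambda>h. L (0,h)) = (\<lambda>h. L (0,1) * h)"
  proof
    fix h :: complex show "L (0,h) = L (0,1) * h" using assms(2)[of h 0 1] by simp
  qed
  ultimately show ?thesis unfolding has_field_derivative_def by simp
qed

lemma circ_param_cont:
  fixes H :: "'a::topological_space \<Rightarrow> complex \<Rightarrow> complex"
  assumes "continuous_on (S \<times> sphere 0 R) (\<lambda>p. H (fst p) (snd p))" "0 \<le> R"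
  shows "continuous_on S (\<lambda>x. contour_integral (circlepath 0 R) (H x))"
proof -
  have eq: "contour_integral (circlepath 0 R) (H x) =
      integral (cbox 0 1) (\<lambda>t. H x (R * exp (2 * of_real pi * \<i> * of_real t)) * (2 * pi * \<i> * R * exp (2 * of_real pi * \<i> * t)))" for x
    unfolding contour_integral_integral vector_derivative_circlepath by (simp add: circlepath cbox_interval)
  have m: "continuous_on (S \<times> cbox 0 1) (\<lambda>p::'a\<times>real. (fst p, R * exp (2 * of_real pi * \<i> * of_real (snd p))))"
    by (intro continuous_intros)
  have im: "(\<lambda>p::'a\<times>real. (fst p, R * exp (2 * of_real pi * \<i> * of_real (snd p)))) ` (S \<times> cbox 0 1) \<subseteq> S \<times> sphere 0 R"
    using assms(2) by (auto simp: norm_mult)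
  have "continuous_on (S \<times> cbox 0 1) (\<lambda>p::'a\<times>real. H (fst p) (R * exp (2 * of_real pi * \<i> * of_real (snd p))))"
    using continuous_on_compose2[OF assms(1) m im] by simp
  then have "continuous_on (S \<times> cbox 0 1) (\<lambda>p::'a\<times>real. H (fst p) (R * exp (2 * of_real pi * \<i> * of_real (snd p))) * (2 * pi * \<i> * R * exp (2 * of_real pi * \<i> * (snd p))))"
    by (intro continuous_intros)
  then have "continuous_on S (\<lambda>x. integral (cbox 0 1) (\<lambda>t. H x (R * exp (2 * of_real pi * \<i> * of_real t)) * (2 * pi * \<i> * R * exp (2 * of_real pi * \<i> * t))))"
    by (intro integral_continuous_on_param) (simp add: split_def)
  then show ?thesis unfolding eq .
qed

definition CS :: "real \<Rightarrow> (complex \<Rightarrow> complex \<Rightarrow> complex) \<Rightarrow> bool" where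
  "CS R H \<longleftrightarrow> continuous_on (sphere 0 R \<times> sphere 0 R) (\<lambda>p. H (fst p) (snd p))"

definition dci :: "real \<Rightarrow> (complex \<Rightarrow> complex \<Rightarrow> complex) \<Rightarrow> complex" where
  "dci R H = contour_integral (circlepath 0 R) (\<lambda>x. contour_integral (circlepath 0 R) (H x))"

lemma CS_inner:
  assumes "CS R H" "x \<in> sphere 0 R" "0 \<le> R"
  shows "H x contour_integrable_on circlepath 0 R"
proof (rule contour_integrable_continuous_circlepath)
  have m: "continuous_on (sphere 0 R) (\<lambda>y::complex. (x, y))" by (intro continuous_intros)
  have im: "(\<lambda>y. (x, y)) ` sphere 0 R \<subseteq> sphere 0 R \<times> sphere 0 R" using assms(2) by auto
  show "continuous_on (path_image (circlepath 0 R)) (H x)"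
    using continuous_on_compose2[OF assms(1)[unfolded CS_def] m im] assms(3)
    by (simp add: path_image_circlepath_nonneg)
qed

lemma CS_outer_cont:
  assumes "CS R H" "0 \<le> R"
  shows "continuous_on (sphere 0 R) (\<lambda>x. contour_integral (circlepath 0 R) (H x))"
  using circ_param_cont[of "sphere 0 R" R H] assms by (simp add: CS_def)

lemma CS_outer:
  assumes "CS R H" "0 \<le> R"
  shows "(\<lambda>x. contour_integral (circlepath 0 R) (H x)) contour_integrable_on circlepath 0 R"
  using CS_outer_cont[OF assms] assms(2)
  by (intro contour_integrable_continuous_circlepath) (simp add: path_image_circlepath_nonneg)

lemma dci_sum:
  assumes "finite T" "\<And>p. p \<in> T \<Longrightarrow> CS R (H p)" "0 \<le> R"
  shows "dci R (\<lambda>x y. \<Sum>p\<in>T. H p x y) = (\<Sum>p\<in>T. dci R (H p))"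
proof -
  have "dci R (\<lambda>x y. \<Sum>p\<in>T. H p x y) =
      contour_integral (circlepath 0 R) (\<lambda>x. \<Sum>p\<in>T. contour_integral (circlepath 0 R) (H p x))"
    unfolding dci_def
  proof (rule contour_integral_cong[OF refl])
    fix x assume "x \<in> path_image (circlepath 0 R)"
    then have "x \<in> sphere 0 R" using assms(3) by (simp add: path_image_circlepath_nonneg)
    then show "contour_integral (circlepath 0 R) (\<lambda>y. \<Sum>p\<in>T. H p x y) =
        (\<Sum>p\<in>T. contour_integral (circlepath 0 R) (H p x))"
      using assms by (intro contour_integral_sum) (auto intro: CS_inner)
  qed
  also have "\<dots> = (\<Sum>p\<in>T. dci R (H p))"
    unfolding dci_def using assms by (intro contour_integral_sum) (auto intro: CS_outer)
  finally show ?thesis .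
qed

lemma dci_diff:
  assumes "CS R H1" "CS R H2" "0 \<le> R"
  shows "dci R (\<lambda>x y. H1 x y - H2 x y) = dci R H1 - dci R H2"
proof -
  have "dci R (\<lambda>x y. H1 x y - H2 x y) =
      contour_integral (circlepath 0 R) (\<lambda>x. contour_integral (circlepath 0 R) (H1 x) - contour_integral (circlepath 0 R) (H2 x))"
    unfolding dci_def
  proof (rule contour_integral_cong[OF refl])
    fix x assume "x \<in> path_image (circlepath 0 R)"
    then have "x \<in> sphere 0 R" using assms(3) by (simp add: path_image_circlepath_nonneg)
    then show "contour_integral (circlepath 0 R) (\<lambda>y. H1 x y - H2 x y) =
        contour_integral (circlepath 0 R) (H1 x) - contour_integral (circlepath 0 R) (H2 x)"
      using assms by (intro contour_integral_diff) (auto intro: CS_inner)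
  qed
  also have "\<dots> = dci R H1 - dci R H2"
    unfolding dci_def using assms by (intro contour_integral_diff) (auto intro: CS_outer)
  finally show ?thesis .
qed

lemma dci_cmult:
  assumes "CS R H" "0 \<le> R"
  shows "dci R (\<lambda>x y. c * H x y) = c * dci R H"
proof -
  have "dci R (\<lambda>x y. c * H x y) =
      contour_integral (circlepath 0 R) (\<lambda>x. c * contour_integral (circlepath 0 R) (H x))"
    unfolding dci_def
  proof (rule contour_integral_cong[OF refl])
    fix x assume "x \<in> path_image (circlepath 0 R)"
    then have "x \<in> sphere 0 R" using assms(2) by (simp add: path_image_circlepath_nonneg)
    then show "contour_integral (circlepath 0 R) (\<lambda>y. c * H x y) =
        c * contour_integral (circlepath 0 R) (H x)"
      using assms by (intro contour_integral_lmul) (auto intro: CS_inner)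
  qed
  also have "\<dots> = c * dci R H"
    unfolding dci_def using assms by (intro contour_integral_lmul) (auto intro: CS_outer)
  finally show ?thesis .
qed

lemma dci_bound:
  assumes "CS R H" "0 < R" "0 \<le> B" "\<And>x y. x \<in> sphere 0 R \<Longrightarrow> y \<in> sphere 0 R \<Longrightarrow> norm (H x y) \<le> B"
  shows "norm (dci R H) \<le> B * (2*pi*R) * (2*pi*R)"
proof -
  have inner: "norm (contour_integral (circlepath 0 R) (H x)) \<le> B * (2*pi*R)" if "x \<in> sphere 0 R" for x
  proof (rule has_contour_integral_bound_circlepath)
    show "(H x has_contour_integral contour_integral (circlepath 0 R) (H x)) (circlepath 0 R)"
      using CS_inner[OF assms(1) that] assms(2) by (simp add: has_contour_integral_integral)
    show "\<And>y. norm (y - 0) = R \<Longrightarrow> norm (H x y) \<le> B" using assms(4) that by simp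
  qed (use assms in auto)
  show ?thesis unfolding dci_def
  proof (rule has_contour_integral_bound_circlepath)
    show "((\<lambda>x. contour_integral (circlepath 0 R) (H x)) has_contour_integral
        contour_integral (circlepath 0 R) (\<lambda>x. contour_integral (circlepath 0 R) (H x))) (circlepath 0 R)"
      using CS_outer[OF assms(1)] assms(2) by (simp add: has_contour_integral_integral)
    show "\<And>x. norm (x - 0) = R \<Longrightarrow> norm (contour_integral (circlepath 0 R) (H x)) \<le> B * (2*pi*R)"
      using inner by simp
  qed (use assms in auto)
qed

lemma cauchy_double:
  fixes G :: "complex \<times> complex \<Rightarrow> complex"
  assumes "R > 0" and contG: "continuous_on (cball 0 R \<times> cball 0 R) G"
    and hol1: "\<And>b. b \<in> cball 0 R \<Longrightarrow> (\<lambda>x. G (x,b)) holomorphic_on ball 0 R"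
    and hol2: "\<And>a. a \<in> cball 0 R \<Longrightarrow> (\<lambda>y. G (a,y)) holomorphic_on ball 0 R"
    and w1: "norm w1 < R" and w2: "norm w2 < R"
  shows "dci R (\<lambda>x y. G (x,y) * (1 / ((x-w1)*(y-w2)))) = (2 * of_real pi * \<i>) * (2 * of_real pi * \<i> * G (w1,w2))"
proof -
  have cont1: "continuous_on (cball 0 R) (\<lambda>x. G (x,b))" if "b \<in> cball 0 R" for b
  proof -
    have m: "continuous_on (cball 0 R) (\<lambda>x::complex. (x, b))" by (intro continuous_intros)
    have im: "(\<lambda>x. (x,b)) ` cball 0 R \<subseteq> cball 0 R \<times> cball 0 R" using that by auto
    show ?thesis using continuous_on_compose2[OF contG m im] by simp
  qed
  have cont2: "continuous_on (cball 0 R) (\<lambda>y. G (a,y))" if "a \<in> cball 0 R" for a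
  proof -
    have m: "continuous_on (cball 0 R) (\<lambda>y::complex. (a, y))" by (intro continuous_intros)
    have im: "(\<lambda>y. (a,y)) ` cball 0 R \<subseteq> cball 0 R \<times> cball 0 R" using that by auto
    show ?thesis using continuous_on_compose2[OF contG m im] by simp
  qed
  have inner: "contour_integral (circlepath 0 R) (\<lambda>y. G (x,y) * (1 / ((x-w1)*(y-w2))))
      = 2 * of_real pi * \<i> * G (x,w2) / (x - w1)" if "x \<in> sphere 0 R" for x
  proof -
    have xc: "x \<in> cball 0 R" using that by auto
    have "((\<lambda>y. G (x,y) / (y - w2)) has_contour_integral (2 * of_real pi * \<i> * G (x,w2))) (circlepath 0 R)"
      using Cauchy_integral_circlepath[OF cont2[OF xc] hol2[OF xc], of w2] w2 by simp
    from has_contour_integral_div[OF this, of "x - w1"]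
    have "((\<lambda>y. G (x,y) * (1 / ((x-w1)*(y-w2)))) has_contour_integral (2 * of_real pi * \<i> * G (x,w2) / (x - w1))) (circlepath 0 R)"
      by (simp add: divide_divide_eq_left mult.commute)
    then show ?thesis by (rule contour_integral_unique)
  qed
  have "dci R (\<lambda>x y. G (x,y) * (1 / ((x-w1)*(y-w2)))) =
      contour_integral (circlepath 0 R) (\<lambda>x. 2 * of_real pi * \<i> * G (x,w2) / (x - w1))"
    unfolding dci_def
    using \<open>R>0\<close> by (intro contour_integral_cong refl inner) (simp add: path_image_circlepath_nonneg)
  also have "\<dots> = 2 * of_real pi * \<i> * (2 * of_real pi * \<i> * G (w1,w2))"
  proof (rule contour_integral_unique)
    have w2c: "w2 \<in> cball 0 R" using w2 by auto
    have c: "continuous_on (cball 0 R) (\<lambda>x. 2 * of_real pi * \<i> * G (x,w2))"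
      using cont1[OF w2c] by (intro continuous_intros)
    have h: "(\<lambda>x. 2 * of_real pi * \<i> * G (x,w2)) holomorphic_on ball 0 R"
      using hol1[OF w2c] by (intro holomorphic_intros)
    show "((\<lambda>x. 2 * of_real pi * \<i> * G (x,w2) / (x - w1)) has_contour_integral
        2 * of_real pi * \<i> * (2 * of_real pi * \<i> * G (w1,w2))) (circlepath 0 R)"
      using Cauchy_integral_circlepath[OF c h, of w1] w1 by simp
  qed
  finally show ?thesis .
qed

lemma geo_rem:
  fixes w z :: complex
  assumes "z \<noteq> 0" "w \<noteq> z"
  shows "1/(z-w) - (\<Sum>j<N. w^j/z^(j+1)) = (w/z)^N/(z-w)"
proof -
  have q: "w/z \<noteq> 1" using assms by (auto simp: field_simps)
  have "(\<Sum>j<N. w^j/z^(j+1)) = (\<Sum>j<N. (w/z)^j) / z"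
    by (simp add: sum_divide_distrib power_divide mult.commute)
  also have "\<dots> = ((1 - (w/z)^N) / (1 - w/z)) / z" using q by (simp only: sum_gp_strict if_False)
  also have "\<dots> = (1 - (w/z)^N) / (z - w)" using assms by (simp add: field_simps)
  finally have S: "(\<Sum>j<N. w^j/z^(j+1)) = (1 - (w/z)^N) / (z - w)" .
  show ?thesis unfolding S by (simp add: diff_divide_distrib[symmetric])
qed

lemma geo_bound:
  fixes w z :: complex
  assumes "R > 0" "norm z = R" "norm w \<le> R/2"
  shows "norm (1/(z-w)) \<le> 2/R" "norm (1/(z-w) - (\<Sum>j<N. w^j/z^(j+1))) \<le> (1/2)^N * (2/R)"
proof -
  have d: "norm (z - w) \<ge> R/2" using norm_triangle_ineq2[of z w] assms by linarith
  then have zw: "z \<noteq> w" using assms by auto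
  have z0: "z \<noteq> 0" using assms by auto
  show "norm (1/(z-w)) \<le> 2/R" using d assms(1)
    by (simp add: norm_divide divide_simps)
  have q: "norm (w/z) \<le> 1/2" using assms by (simp add: norm_divide divide_simps)
  have "norm ((w/z)^N) \<le> (1/2)^N" unfolding norm_power by (intro power_mono q) simp
  moreover have "norm (1/(z-w)) \<le> 2/R" using d assms(1) by (simp add: norm_divide divide_simps)
  ultimately have "norm ((w/z)^N) * norm (1/(z-w)) \<le> (1/2)^N * (2/R)"
    by (intro mult_mono) auto
  then show "norm (1/(z-w) - (\<Sum>j<N. w^j/z^(j+1))) \<le> (1/2)^N * (2/R)"
    unfolding geo_rem[OF z0 zw[symmetric]] by (simp add: norm_divide norm_mult)
qed

lemma prod_approx:
  fixes a b a' b' :: complex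
  assumes "norm a \<le> A" "norm b \<le> A" "norm (a - a') \<le> E" "norm (b - b') \<le> E" "E \<le> A"
  shows "norm (a*b - a'*b') \<le> 3*A*E"
proof -
  have "a*b - a'*b' = (a - a')*b + a'*(b - b')" by (simp add: algebra_simps)
  then have "norm (a*b - a'*b') \<le> norm (a - a') * norm b + norm a' * norm (b - b')"
    by (metis norm_mult norm_triangle_ineq)
  moreover have "norm a' \<le> A + E"
    using norm_triangle_sub[of a' a] assms(1,3) by (simp add: norm_minus_commute)
  moreover have "0 \<le> E" using assms(3) norm_ge_zero order_trans by blast
  ultimately have "norm (a*b - a'*b') \<le> E * A + (A + E) * E"
    using assms by (smt (verit) mult_mono norm_ge_zero)
  also have "\<dots> \<le> 3*A*E"
  proof -
    have "E*E \<le> A*E" by (rule mult_right_mono[OF assms(5) \<open>0\<le>E\<close>])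
    moreover have "E * A + (A + E) * E = 2*(A*E) + E*E" by (simp add: algebra_simps)
    moreover have "3*A*E = 3*(A*E)" by simp
    ultimately show ?thesis by linarith
  qed
  finally show ?thesis .
qed

lemma kernel_bound:
  fixes w1 w2 z1 z2 :: complex
  assumes "R > 0" "norm z1 = R" "norm z2 = R" "norm w1 \<le> R/2" "norm w2 \<le> R/2"
  shows "norm (1/((z1-w1)*(z2-w2)) - (\<Sum>p\<in>{..<N}\<times>{..<N}. (w1^fst p/z1^(fst p+1)) * (w2^snd p/z2^(snd p+1))))
     \<le> 3 * (2/R) * ((1/2)^N * (2/R))"
proof -
  have eq: "(\<Sum>p\<in>{..<N}\<times>{..<N}. (w1^fst p/z1^(fst p+1)) * (w2^snd p/z2^(snd p+1)))
      = (\<Sum>j<N. w1^j/z1^(j+1)) * (\<Sum>k<N. w2^k/z2^(k+1))"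
    by (simp add: sum_product sum.cartesian_product split_def)
  have "(1/2::real)^N \<le> 1" by (simp add: power_le_one)
  then have E: "(1/2::real)^N * (2/R) \<le> 2/R" using mult_right_mono[of "(1/2::real)^N" 1 "2/R"] assms(1) by simp
  have "1/((z1-w1)*(z2-w2)) = (1/(z1-w1)) * (1/(z2-w2))" by simp
  then show ?thesis unfolding eq
    using prod_approx[OF geo_bound(1)[OF assms(1,2,4)] geo_bound(1)[OF assms(1,3,5)]
        geo_bound(2)[OF assms(1,2,4)] geo_bound(2)[OF assms(1,3,5)] E] by simp
qed

lemma CS_G:
  fixes G :: "complex \<times> complex \<Rightarrow> complex"
  assumes "continuous_on (cball 0 R \<times> cball 0 R) G"
  shows "CS R (\<lambda>x y. G (x,y))"
  unfolding CS_def prod.collapse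
  by (rule continuous_on_subset[OF assms]) auto

lemma CS_mult: "CS R H1 \<Longrightarrow> CS R H2 \<Longrightarrow> CS R (\<lambda>x y. H1 x y * H2 x y)"
  unfolding CS_def by (rule continuous_on_mult)

lemma CS_diff: "CS R H1 \<Longrightarrow> CS R H2 \<Longrightarrow> CS R (\<lambda>x y. H1 x y - H2 x y)"
  unfolding CS_def by (rule continuous_on_diff)

lemma CS_ker:
  assumes "norm w1 < R" "norm w2 < R"
  shows "CS R (\<lambda>x y. 1/((x-w1)*(y-w2)))"
  unfolding CS_def using assms
  by (intro continuous_intros) auto

lemma CS_mono:
  assumes "R > 0"
  shows "CS R (\<lambda>x y. 1/x^(j+1) * (1/y^(k+1)))"
  unfolding CS_def using assms
  by (intro continuous_intros) auto

lemma CS_KN: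
  assumes "R > 0"
  shows "CS R (\<lambda>x y. \<Sum>p\<in>T. (w1^fst p/x^(fst p+1)) * (w2^snd p/y^(snd p+1)))"
  unfolding CS_def using assms
  by (intro continuous_intros) auto

lemma holo_poly_approx:
  fixes G :: "complex \<times> complex \<Rightarrow> complex"
  assumes "R > 0" and contG: "continuous_on (cball 0 R \<times> cball 0 R) G"
    and hol1: "\<And>b. b \<in> cball 0 R \<Longrightarrow> (\<lambda>x. G (x,b)) holomorphic_on ball 0 R"
    and hol2: "\<And>a. a \<in> cball 0 R \<Longrightarrow> (\<lambda>y. G (a,y)) holomorphic_on ball 0 R"
    and "e > 0"
  shows "\<exists>S c. finite S \<and> (\<forall>w1 w2. norm w1 \<le> R/2 \<longrightarrow> norm w2 \<le> R/2 \<longrightarrow>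
      norm (G (w1,w2) - (\<Sum>x\<in>S. c x * w1 ^ fst x * w2 ^ snd x)) < e)"
proof -
  obtain M where M: "M > 0" "\<forall>p\<in>cball 0 R \<times> cball 0 R. norm (G p) \<le> M"
    using bounded_cont_compact[OF compact_Times[OF compact_cball compact_cball] contG] by blast
  obtain N where N: "(1/2::real)^N < e / (12*M)"
    using real_arch_pow_inv[of "e / (12*M)" "1/2"] \<open>e>0\<close> M(1) by auto
  define T where "T = {..<N} \<times> {..<N}"
  define c2 where "c2 = (2 * of_real pi * \<i>) * (2 * of_real pi * \<i> :: complex)"
  define H where "H = (\<lambda>(p::nat\<times>nat) x y. G (x,y) * (1/x^(fst p+1) * (1/y^(snd p+1))))"
  define c where "c = (\<lambda>p. dci R (H p) / c2)"
  have R0: "0 \<le> R" using \<open>R>0\<close> by simp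
  have CSG: "CS R (\<lambda>x y. G (x,y))" by (rule CS_G[OF contG])
  have CSH: "CS R (H p)" for p
    unfolding H_def split_def by (intro CS_mult CSG CS_mono \<open>R>0\<close>)
  have c2n: "norm c2 = 4 * pi^2" by (simp add: c2_def norm_mult power2_eq_square)
  have "norm (G (w1,w2) - (\<Sum>x\<in>T. c x * w1 ^ fst x * w2 ^ snd x)) < e"
    if w1: "norm w1 \<le> R/2" and w2: "norm w2 \<le> R/2" for w1 w2
  proof -
    define KN where "KN = (\<lambda>x y. \<Sum>p\<in>T. (w1^fst p/x^(fst p+1)) * (w2^snd p/y^(snd p+1)))"
    define K where "K = (\<lambda>x y. 1/((x-w1)*(y-w2)))"
    have w1R: "norm w1 < R" and w2R: "norm w2 < R" using w1 w2 \<open>R>0\<close> by auto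
    have CSK: "CS R K" unfolding K_def by (rule CS_ker[OF w1R w2R])
    have CSKN: "CS R KN" unfolding KN_def by (rule CS_KN[OF \<open>R>0\<close>])
    have fun_eq: "(\<lambda>x y. G (x,y) * KN x y) = (\<lambda>x y. \<Sum>p\<in>T. (w1^fst p * w2^snd p) * H p x y)"
      by (intro ext) (simp add: KN_def H_def sum_distrib_left divide_inverse mult_ac)
    have "dci R (\<lambda>x y. G (x,y) * KN x y) = (\<Sum>p\<in>T. dci R (\<lambda>x y. (w1^fst p * w2^snd p) * H p x y))"
      unfolding fun_eq
    proof (rule dci_sum)
      fix p show "CS R (\<lambda>x y. (w1^fst p * w2^snd p) * H p x y)"
        using CSH[of p] unfolding CS_def by (intro continuous_intros)
    qed (auto simp: T_def R0)
    also have "\<dots> = (\<Sum>p\<in>T. (w1^fst p * w2^snd p) * dci R (H p))"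
      by (intro sum.cong refl dci_cmult CSH R0)
    finally have P_eq: "(\<Sum>x\<in>T. c x * w1 ^ fst x * w2 ^ snd x) = dci R (\<lambda>x y. G (x,y) * KN x y) / c2"
      by (simp add: c_def sum_divide_distrib mult_ac)
    have G_eq: "G (w1,w2) = dci R (\<lambda>x y. G (x,y) * K x y) / c2"
      using cauchy_double[OF \<open>R>0\<close> contG hol1 hol2 w1R w2R]
      by (simp add: K_def c2_def)
    have "G (w1,w2) - (\<Sum>x\<in>T. c x * w1 ^ fst x * w2 ^ snd x) =
        (dci R (\<lambda>x y. G (x,y) * K x y) - dci R (\<lambda>x y. G (x,y) * KN x y)) / c2"
      unfolding P_eq G_eq by (simp add: diff_divide_distrib)
    also have "\<dots> = dci R (\<lambda>x y. G (x,y) * (K x y - KN x y)) / c2"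
      using dci_diff[OF CS_mult[OF CSG CSK] CS_mult[OF CSG CSKN] R0]
      by (simp add: right_diff_distrib)
    finally have diff_eq: "G (w1,w2) - (\<Sum>x\<in>T. c x * w1 ^ fst x * w2 ^ snd x) =
        dci R (\<lambda>x y. G (x,y) * (K x y - KN x y)) / c2" .
    define B where "B = M * (3 * (2/R) * ((1/2)^N * (2/R)))"
    have B0: "0 \<le> B" unfolding B_def using M(1) \<open>R>0\<close> by simp
    have bnd: "norm (G (x,y) * (K x y - KN x y)) \<le> B" if "x \<in> sphere 0 R" "y \<in> sphere 0 R" for x y
    proof -
      have "norm (G (x,y)) \<le> M" using M(2) that by auto
      moreover have "norm (K x y - KN x y) \<le> 3 * (2/R) * ((1/2)^N * (2/R))"
        unfolding K_def KN_def T_def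
        using kernel_bound[OF \<open>R>0\<close> _ _ w1 w2, of x y N] that by simp
      ultimately show ?thesis unfolding B_def norm_mult using M(1)
        by (intro mult_mono) auto
    qed
    have "norm (dci R (\<lambda>x y. G (x,y) * (K x y - KN x y))) \<le> B * (2*pi*R) * (2*pi*R)"
      by (rule dci_bound[OF CS_mult[OF CSG CS_diff[OF CSK CSKN]] \<open>R>0\<close> B0 bnd])
    moreover have "B * (2*pi*R) * (2*pi*R) / (4 * pi^2) = 12 * M * (1/2)^N"
      unfolding B_def using \<open>R>0\<close> by (simp add: field_simps power2_eq_square)
    moreover have "12 * M * (1/2)^N < e"
      using N M(1) by (simp add: field_simps)
    ultimately have "norm (dci R (\<lambda>x y. G (x,y) * (K x y - KN x y))) / (4 * pi^2) < e"
      by (smt (verit) divide_right_mono pi_gt_zero zero_less_power)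
    then show ?thesis unfolding diff_eq norm_divide c2n .
  qed
  moreover have "finite T" by (simp add: T_def)
  ultimately show ?thesis by blast
qed

lemma holo2_setup:
  fixes G :: "complex \<times> complex \<Rightarrow> complex"
  assumes "holomorphic2_near_0 G"
  obtains R where "R > 0" "continuous_on (cball 0 R \<times> cball 0 R) G"
    "\<And>b. b \<in> cball 0 R \<Longrightarrow> (\<lambda>x. G (x,b)) holomorphic_on ball 0 R"
    "\<And>a. a \<in> cball 0 R \<Longrightarrow> (\<lambda>y. G (a,y)) holomorphic_on ball 0 R"
proof -
  obtain U where U: "open U" "(0,0) \<in> U"
    and hd: "\<And>p. p \<in> U \<Longrightarrow> \<exists>L. (G has_derivative L) (at p) \<and> (\<forall>c a b. L (c * a, c * b) = c * L (a, b))"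
    using assms unfolding holomorphic2_near_0_def by blast
  obtain \<epsilon> where \<epsilon>: "\<epsilon> > 0" "ball (0,0) \<epsilon> \<subseteq> U" using U open_contains_ball by blast
  define R where "R = \<epsilon>/3"
  have R0: "R > 0" using \<epsilon> by (simp add: R_def)
  have sub: "cball 0 R \<times> cball 0 R \<subseteq> U"
  proof
    fix p :: "complex \<times> complex" assume "p \<in> cball 0 R \<times> cball 0 R"
    then obtain a b :: complex where p: "p = (a,b)" "norm a \<le> R" "norm b \<le> R" by auto
    have "norm (a,b) \<le> norm a + norm b" by (rule norm_Pair_le)
    then have "dist p (0,0) < \<epsilon>" using p R0 by (simp add: R_def dist_norm)
    then have "dist (0,0) p < \<epsilon>" by (simp add: dist_commute)
    then show "p \<in> U" using \<epsilon>(2) by auto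
  qed
  have contU: "continuous_on U G"
  proof (rule continuous_at_imp_continuous_on, rule ballI)
    fix p assume "p \<in> U"
    then obtain L where "(G has_derivative L) (at p)" using hd by blast
    then show "isCont G p" by (rule has_derivative_continuous)
  qed
  show ?thesis
  proof (rule that[OF R0 continuous_on_subset[OF contU sub]])
    fix b :: complex assume b: "b \<in> cball 0 R"
    show "(\<lambda>x. G (x,b)) holomorphic_on ball 0 R"
      unfolding holomorphic_on_def
    proof
      fix x :: complex assume "x \<in> ball 0 R"
      then have "(x,b) \<in> U" using sub b by auto
      then obtain L where L: "(G has_derivative L) (at (x,b))" "\<forall>c a b. L (c * a, c * b) = c * L (a, b)"
        using hd by blast
      have "((\<lambda>x. G (x,b)) has_field_derivative L (1,0)) (at x)"
        by (rule partial1[OF L(1)]) (use L(2) in auto)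
      then show "(\<lambda>x. G (x,b)) field_differentiable at x within ball 0 R"
        using field_differentiable_at_within field_differentiable_def by blast
    qed
  next
    fix a :: complex assume a: "a \<in> cball 0 R"
    show "(\<lambda>y. G (a,y)) holomorphic_on ball 0 R"
      unfolding holomorphic_on_def
    proof
      fix y :: complex assume "y \<in> ball 0 R"
      then have "(a,y) \<in> U" using sub a by auto
      then obtain L where L: "(G has_derivative L) (at (a,y))" "\<forall>c a b. L (c * a, c * b) = c * L (a, b)"
        using hd by blast
      have "((\<lambda>y. G (a,y)) has_field_derivative L (0,1)) (at y)"
        by (rule partial2[OF L(1)]) (use L(2) in auto)
      then show "(\<lambda>y. G (a,y)) field_differentiable at y within ball 0 R"
        using field_differentiable_at_within field_differentiable_def by blast
    qed
  qed
qed

lemma contraction: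
  fixes G :: "complex \<times> complex \<Rightarrow> complex"
  assumes "R > 0" and contG: "continuous_on (cball 0 R \<times> cball 0 R) G"
    and hol2: "\<And>a. a \<in> cball 0 R \<Longrightarrow> (\<lambda>y. G (a,y)) holomorphic_on ball 0 R"
    and G0: "G (0,0) = 0"
  obtains \<delta> where "\<delta> > 0" "\<delta> \<le> R/2"
    "\<And>a x y. norm a \<le> \<delta> \<Longrightarrow> norm x \<le> \<delta> \<Longrightarrow> norm y \<le> \<delta> \<Longrightarrow>
       norm (x * ((1 + G (a,x))^2 - 1) - y * ((1 + G (a,y))^2 - 1)) \<le> 1/2 * norm (x - y)"
proof -
  have in0: "(0,0) \<in> cball (0::complex) R \<times> cball (0::complex) R" using \<open>R>0\<close> by auto
  obtain d where d: "d > 0" "\<forall>p\<in>cball 0 R \<times> cball 0 R. dist p (0,0) < d \<longrightarrow> dist (G p) (G (0,0)) < 1/64"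
    using contG[unfolded continuous_on_iff, rule_format, OF in0, of "1/64"] by auto
  define \<delta>0 where "\<delta>0 = min (d/3) (R/2)"
  define \<delta> where "\<delta> = \<delta>0/2"
  have d0: "\<delta>0 > 0" "\<delta>0 \<le> R/2" "\<delta>0 \<le> d/3" using d \<open>R>0\<close> by (auto simp: \<delta>0_def)
  have Psi: "norm ((1 + G (a,x))^2 - 1) \<le> 1/16" if "norm a \<le> \<delta>0" "norm x \<le> \<delta>0" for a x
  proof -
    have "(a,x) \<in> cball 0 R \<times> cball 0 R" using that d0 by auto
    moreover have "dist (a,x) (0,0) < d"
      using norm_Pair_le[of a x] that d0 d by (simp add: dist_norm)
    ultimately have g: "norm (G (a,x)) < 1/64" using d(2) G0 by (auto simp: dist_norm)
    have "(1 + G (a,x))^2 - 1 = G (a,x) * (2 + G (a,x))" by (simp add: power2_eq_square algebra_simps)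
    then have "norm ((1 + G (a,x))^2 - 1) = norm (G (a,x)) * norm (2 + G (a,x))" by (simp add: norm_mult)
    also have "\<dots> \<le> (1/64) * (2 + 1/64)"
    proof (rule mult_mono)
      show "norm (2 + G (a,x)) \<le> 2 + 1/64"
        using norm_triangle_ineq[of 2 "G (a,x)"] g by simp
    qed (use g in auto)
    finally show ?thesis by simp
  qed
  show ?thesis
  proof (rule that)
    show "\<delta> > 0" "\<delta> \<le> R/2" using d0 by (auto simp: \<delta>_def)
  next
    fix a x y :: complex
    assume a: "norm a \<le> \<delta>" and x: "norm x \<le> \<delta>" and y: "norm y \<le> \<delta>"
    define \<phi> where "\<phi> = (\<lambda>t. t * ((1 + G (a,t))^2 - 1))"
    have ac: "a \<in> cball 0 R" using a d0 by (auto simp: \<delta>_def)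
    have hol: "\<phi> holomorphic_on ball 0 R"
      unfolding \<phi>_def using hol2[OF ac] by (intro holomorphic_intros)
    have sub: "cball z \<delta> \<subseteq> ball 0 R" if "z \<in> cball 0 \<delta>" for z :: complex
    proof
      fix t :: complex assume "t \<in> cball z \<delta>"
      then have "norm t \<le> norm z + \<delta>" using norm_triangle_sub[of t z] by (simp add: dist_norm norm_minus_commute)
      then show "t \<in> ball 0 R" using that d0 \<open>R>0\<close> by (auto simp: \<delta>_def)
    qed
    have dbound: "norm (deriv \<phi> z) \<le> 1/8" if z: "z \<in> cball 0 \<delta>" for z
    proof -
      have "norm ((deriv ^^ 1) \<phi> z) \<le> fact 1 * (\<delta>/8) / \<delta>^1"
      proof (rule Cauchy_inequality)
        show "\<phi> holomorphic_on ball z \<delta>"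
          using hol sub[OF z] ball_subset_cball holomorphic_on_subset by blast
        show "continuous_on (cball z \<delta>) \<phi>"
          using holomorphic_on_imp_continuous_on[OF hol] sub[OF z] continuous_on_subset by blast
        show "0 < \<delta>" using d0 by (simp add: \<delta>_def)
        fix t assume t: "norm (z - t) = \<delta>"
        have nt: "norm t \<le> \<delta>0"
          using norm_triangle_sub[of t z] z t by (simp add: norm_minus_commute \<delta>_def)
        have "norm (\<phi> t) = norm t * norm ((1 + G (a,t))^2 - 1)" by (simp add: \<phi>_def norm_mult)
        also have "\<dots> \<le> \<delta>0 * (1/16)"
        proof (rule mult_mono)
          have "norm a \<le> \<delta>0" using a d0 by (simp add: \<delta>_def)
          then show "norm ((1 + G (a,t))^2 - 1) \<le> 1/16" by (rule Psi[OF _ nt])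
        qed (use nt d0 in auto)
        finally show "norm (\<phi> t) \<le> \<delta>/8" by (simp add: \<delta>_def)
      qed
      then show ?thesis using d0 by (simp add: \<delta>_def)
    qed
    have "norm (\<phi> x - \<phi> y) \<le> 1/8 * norm (x - y)"
    proof (rule field_differentiable_bound[where S = "cball (0::complex) \<delta>" and f' = "deriv \<phi>"])
      show "convex (cball (0::complex) \<delta>)" by simp
      fix z :: complex assume z: "z \<in> cball 0 \<delta>"
      have "z \<in> cball z \<delta>" using d0 by (simp add: \<delta>_def)
      then have "z \<in> ball 0 R" using sub[OF z] by blast
      then show "(\<phi> has_field_derivative deriv \<phi> z) (at z within cball 0 \<delta>)"
        by (rule holomorphic_derivI[OF hol open_ball])
      show "norm (deriv \<phi> z) \<le> 1/8" by (rule dbound[OF z])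
    qed (use x y in auto)
    then have "norm (x * ((1 + G (a,x))^2 - 1) - y * ((1 + G (a,y))^2 - 1)) \<le> 1/8 * norm (x - y)"
      unfolding \<phi>_def .
    then show "norm (x * ((1 + G (a,x))^2 - 1) - y * ((1 + G (a,y))^2 - 1)) \<le> 1/2 * norm (x - y)"
      using norm_ge_zero[of "x - y"] by linarith
  qed
qed

theorem mainTheorem10:
  fixes g :: "complex \<Rightarrow> complex"
    and G :: "complex \<times> complex \<Rightarrow> complex"
    and F :: "complex \<times> complex \<Rightarrow> complex"
  assumes "C1_near_0 g"
    and "g 0 = 0"
    and "wirt_z g 0 = 0"
    and "wirt_zbar g 0 = 1"
    and "separate_points_near_0 (\<lambda>z. z ^ 2) (\<lambda>z. (g z) ^ 2)"
    and "holomorphic2_near_0 G"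
    and "G (0, 0) = 0"
    and "\<And>w1 w2. F (w1, w2) = w2 * G (w1 ^ 2, w2 ^ 2)"
  shows "\<exists>r0>0. \<forall>r. 0 < r \<and> r < r0 \<longrightarrow>
           unif_alg (\<lambda>z. z ^ 2) (\<lambda>z. (g z + F (z, g z)) ^ 2) (cball 0 r)
         = unif_alg (\<lambda>z. z ^ 2) (\<lambda>z. (g z) ^ 2) (cball 0 r)"
proof -
  obtain R where R: "R > 0" and contG: "continuous_on (cball 0 R \<times> cball 0 R) G"
    and hol1: "\<And>b. b \<in> cball 0 R \<Longrightarrow> (\<lambda>x. G (x,b)) holomorphic_on ball 0 R"
    and hol2: "\<And>a. a \<in> cball 0 R \<Longrightarrow> (\<lambda>y. G (a,y)) holomorphic_on ball 0 R"
    using holo2_setup[OF assms(6)] by blast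
  obtain \<delta> where \<delta>: "\<delta> > 0" "\<delta> \<le> R/2"
    and contr: "\<And>a x y. norm a \<le> \<delta> \<Longrightarrow> norm x \<le> \<delta> \<Longrightarrow> norm y \<le> \<delta> \<Longrightarrow>
       norm (x * ((1 + G (a,x))^2 - 1) - y * ((1 + G (a,y))^2 - 1)) \<le> 1/2 * norm (x - y)"
    using contraction[OF R contG hol2 assms(7)] by blast
  have approxG: "\<And>e. e > 0 \<Longrightarrow> \<exists>S c. finite S \<and> (\<forall>w1 w2. norm w1 \<le> R/2 \<longrightarrow> norm w2 \<le> R/2 \<longrightarrow>
      norm (G (w1,w2) - (\<Sum>x\<in>S. c x * w1 ^ fst x * w2 ^ snd x)) < e)"
    using holo_poly_approx[OF R contG hol1 hol2] by blast
  obtain Ug g' where Ug: "open Ug" "0 \<in> Ug" "\<forall>z\<in>Ug. (g has_derivative g' z) (at z)"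
    using assms(1) unfolding C1_near_0_def by blast
  have contg: "continuous_on Ug g"
    by (rule continuous_at_imp_continuous_on) (use Ug(3) has_derivative_continuous in blast)
  obtain r2 where r2: "r2 > 0" "ball 0 r2 \<subseteq> Ug" using Ug open_contains_ball by blast
  define u where "u = (\<lambda>z. (g z)^2)"
  have contu: "continuous_on Ug u" unfolding u_def using contg by (intro continuous_intros)
  have u0: "u 0 = 0" by (simp add: u_def assms(2))
  obtain d where d: "d > 0" "\<forall>x'\<in>Ug. dist x' 0 < d \<longrightarrow> dist (u x') (u 0) < \<delta>/2"
    using contu[unfolded continuous_on_iff, rule_format, OF Ug(2), of "\<delta>/2"] \<delta> by auto
  define r0 where "r0 = min (min d r2) (min 1 \<delta>)"
  show ?thesis
  proof (intro exI[of _ r0] conjI allI impI)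
    show "r0 > 0" using d r2 \<delta> by (simp add: r0_def)
    fix r :: real assume r: "0 < r \<and> r < r0"
    define D where "D = cball (0::complex) r"
    have cD: "compact D" by (simp add: D_def)
    have DU: "D \<subseteq> Ug"
    proof
      fix z assume "z \<in> D"
      then have "norm z < r2" using r by (simp add: D_def r0_def)
      then show "z \<in> Ug" using r2 by auto
    qed
    have bnd: "norm (z^2) \<le> \<delta> \<and> norm (u z) \<le> \<delta>/2" if "z \<in> D" for z
    proof
      have z1: "norm z < 1" "norm z < \<delta>" "norm z < d" using that r by (auto simp: D_def r0_def)
      have "norm (z^2) = norm z * norm z" by (simp add: norm_mult power2_eq_square)
      also have "\<dots> \<le> norm z" using z1(1) by (simp add: mult_left_le_one_le)
      finally show "norm (z^2) \<le> \<delta>" using z1 by simp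
      have "dist (u z) (u 0) < \<delta>/2" using d(2) z1(3) DU that by auto
      then show "norm (u z) \<le> \<delta>/2" using u0 by (simp add: dist_norm)
    qed
    define f1 where "f1 = (\<lambda>z::complex. z^2)"
    define h where "h = (\<lambda>z. (g z + F (z, g z))^2)"
    have h_eq: "h z = u z * (1 + G (f1 z, u z))^2" for z
    proof -
      have "g z + F (z, g z) = g z * (1 + G (f1 z, u z))"
        by (simp add: assms(8) f1_def u_def algebra_simps)
      then show ?thesis by (simp add: h_def u_def power_mult_distrib)
    qed
    have h_eq2: "h z = u z + u z * ((1 + G (f1 z, u z))^2 - 1)" for z
      unfolding h_eq by (simp add: algebra_simps)
    have cf1: "continuous_on D f1" unfolding f1_def by (intro continuous_intros)
    have cu: "continuous_on D u" using contu DU continuous_on_subset by blast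
    have Gcomp: "continuous_on D (\<lambda>z. G (v1 z, v2 z))"
      if "continuous_on D v1" "continuous_on D v2" "\<forall>z\<in>D. norm (v1 z) \<le> R/2 \<and> norm (v2 z) \<le> R/2"
      for v1 v2
    proof -
      have m: "continuous_on D (\<lambda>z. (v1 z, v2 z))" using that by (intro continuous_intros)
      have im: "(\<lambda>z. (v1 z, v2 z)) ` D \<subseteq> cball 0 R \<times> cball 0 R" using that R by auto
      show ?thesis using continuous_on_compose2[OF contG m im] by simp
    qed
    have bndR: "\<forall>z\<in>D. norm (f1 z) \<le> R/2 \<and> norm (u z) \<le> R/2"
      using bnd \<delta> by (force simp: f1_def)
    have ch: "continuous_on D h"
    proof -
      have "continuous_on D (\<lambda>z. u z * (1 + G (f1 z, u z))^2)"
        using Gcomp[OF cf1 cu bndR] cu by (intro continuous_intros)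
      then show ?thesis unfolding h_eq[abs_def] .
    qed
    have Gcalc: "(\<lambda>z. G (v1 z, v2 z)) \<in> unif_alg f1' f2' D"
      if c: "continuous_on D f1'" "continuous_on D f2'" and v: "v1 \<in> unif_alg f1' f2' D" "v2 \<in> unif_alg f1' f2' D"
        and b: "\<forall>z\<in>D. norm (v1 z) \<le> R/2 \<and> norm (v2 z) \<le> R/2"
      for f1' f2' v1 v2
      by (rule ua_fcalc[OF cD c v b Gcomp[OF ua_cont[OF v(1)] ua_cont[OF v(2)] b] approxG])
    have Psicalc: "(\<lambda>z. (1 + G (v1 z, v2 z))^2 - 1) \<in> unif_alg f1' f2' D"
      if c: "continuous_on D f1'" "continuous_on D f2'" and v: "v1 \<in> unif_alg f1' f2' D" "v2 \<in> unif_alg f1' f2' D"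
        and b: "\<forall>z\<in>D. norm (v1 z) \<le> R/2 \<and> norm (v2 z) \<le> R/2"
      for f1' f2' v1 v2
      by (rule ua_diff[OF cD c ua_pow[OF cD c ua_add[OF ua_const[OF c] Gcalc[OF c v b]]] ua_const[OF c]])
    have f1_old: "f1 \<in> unif_alg f1 u D" by (rule ua_f1[OF cf1 cu])
    have u_old: "u \<in> unif_alg f1 u D" by (rule ua_f2[OF cf1 cu])
    have "(\<lambda>z. u z * (1 + G (f1 z, u z))^2) \<in> unif_alg f1 u D"
      by (rule ua_mult[OF cD u_old ua_pow[OF cD cf1 cu ua_add[OF ua_const[OF cf1 cu] Gcalc[OF cf1 cu f1_old u_old bndR]]]])
    then have h_old: "h \<in> unif_alg f1 u D" unfolding h_eq[abs_def] .
    have sub1: "unif_alg f1 h D \<subseteq> unif_alg f1 u D"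
      by (rule ua_subset[OF cD cf1 cu f1_old h_old])
    have f1_new: "f1 \<in> unif_alg f1 h D" by (rule ua_f1[OF cf1 ch])
    have h_new: "h \<in> unif_alg f1 h D" by (rule ua_f2[OF cf1 ch])
    define T where "T = (\<lambda>v z. h z - v z * ((1 + G (f1 z, v z))^2 - 1))"
    define vn where "vn n = (T ^^ n) (\<lambda>z. 0)" for n
    have key: "vn n \<in> unif_alg f1 h D \<and> (\<forall>z\<in>D. norm (vn n z - u z) \<le> (1/2)^n * norm (u z))" for n
    proof (induction n)
      case 0
      show ?case using ua_const[OF cf1 ch, of 0] by (simp add: vn_def)
    next
      case (Suc n)
      have vS: "vn (Suc n) = T (vn n)" by (simp add: vn_def)
      have vb: "norm (vn n z) \<le> \<delta>" if z: "z \<in> D" for z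
      proof -
        have "norm (vn n z) \<le> norm (u z) + norm (vn n z - u z)" by (rule norm_triangle_sub)
        moreover have "norm (vn n z - u z) \<le> (1/2)^n * norm (u z)" using Suc z by blast
        moreover have "(1/2::real)^n * norm (u z) \<le> norm (u z)"
          by (simp add: mult_left_le_one_le power_le_one)
        ultimately show ?thesis using bnd[OF z] by linarith
      qed
      have bR: "\<forall>z\<in>D. norm (f1 z) \<le> R/2 \<and> norm (vn n z) \<le> R/2"
        using bnd vb \<delta> by (force simp: f1_def)
      have "(\<lambda>z. h z - vn n z * ((1 + G (f1 z, vn n z))^2 - 1)) \<in> unif_alg f1 h D"
        by (rule ua_diff[OF cD cf1 ch h_new ua_mult[OF cD conjunct1[OF Suc] Psicalc[OF cf1 ch f1_new conjunct1[OF Suc] bR]]])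
      then have mem: "vn (Suc n) \<in> unif_alg f1 h D" unfolding vS T_def .
      have err: "norm (vn (Suc n) z - u z) \<le> (1/2)^(Suc n) * norm (u z)" if z: "z \<in> D" for z
      proof -
        have "vn (Suc n) z - u z = u z * ((1 + G (f1 z, u z))^2 - 1) - vn n z * ((1 + G (f1 z, vn n z))^2 - 1)"
          unfolding vS T_def h_eq2 by simp
        then have "norm (vn (Suc n) z - u z) \<le> 1/2 * norm (u z - vn n z)"
          using contr[of "f1 z" "u z" "vn n z"] bnd[OF z] vb[OF z] \<delta>(1) by (simp add: f1_def)
        also have "\<dots> = 1/2 * norm (vn n z - u z)" by (simp add: norm_minus_commute)
        also have "\<dots> \<le> 1/2 * ((1/2)^n * norm (u z))" using Suc z by auto
        finally show ?thesis by simp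
      qed
      show ?case using mem err by blast
    qed
    have u_new: "u \<in> unif_alg f1 h D"
    proof (rule ua_closed[OF cu])
      fix e :: real assume "e > 0"
      obtain n where n: "(1/2::real)^n < e / \<delta>"
        using real_arch_pow_inv[of "e/\<delta>" "1/2"] \<open>e>0\<close> \<delta> by auto
      have "norm (u z - vn n z) < e" if z: "z \<in> D" for z
      proof -
        have "norm (u z - vn n z) \<le> (1/2)^n * norm (u z)"
          using key[of n] z by (simp add: norm_minus_commute)
        also have "\<dots> \<le> (1/2)^n * (\<delta>/2)" using bnd[OF z] by (intro mult_left_mono) auto
        also have "\<dots> < e" using n \<delta> by (simp add: field_simps)
        finally show ?thesis .
      qed
      then show "\<exists>k\<in>unif_alg f1 h D. \<forall>z\<in>D. norm (u z - k z) < e" using key[of n] by blast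
    qed
    have sub2: "unif_alg f1 u D \<subseteq> unif_alg f1 h D"
      by (rule ua_subset[OF cD cf1 ch f1_new u_new])
    have "unif_alg f1 h D = unif_alg f1 u D" using sub1 sub2 by blast
    then show "unif_alg (\<lambda>z. z ^ 2) (\<lambda>z. (g z + F (z, g z)) ^ 2) (cball 0 r)
         = unif_alg (\<lambda>z. z ^ 2) (\<lambda>z. (g z) ^ 2) (cball 0 r)"
      unfolding f1_def h_def u_def D_def .
  qed
qed

end
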